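(* Let $p,q,r$ be pairwise distinct primes with $p<q$ and $p<r$, and let $n$ be an integer with $0\le n<pqr$. For a finite sequence $(t_1,\dots,t_l)$ and $d\in\{0,1,2\}$ let $N_d(t_1,\dots,t_l)$ be the number of indices $i$ with $t_i=d$. Then $$a_{pqr}(n)=\sum_{k=n-p+1}^{n}\big(N_0(F_k,F_{k-q-r})-N_0(F_{k-q},F_{k-r})\big)=\sum_{k=n-p+1}^{n}\big(N_2(F_k,F_{k-q-r})-N_2(F_{k-q},F_{k-r})\big)$$ $$=\frac12\sum_{k=n-p+1}^{n}\big(N_1(F_{k-q},F_{k-r})-N_1(F_k,F_{k-q-r})\big).$$
   Context: $\Phi_{pqr}(x)=\prod_{0<k<pqr,\ \gcd(k,pqr)=1}(x-\zeta^k)$, $\zeta$ a primitive $pqr$-th root of unity, with coefficients $a_{pqr}(n)$ (zero outside $[0,\deg\Phi_{pqr}]$). For each integer $k$, let $a_k,b_k,c_k$ be the unique integers with $0\le a_k<p$, $0\le b_k<q$, $0\le c_k<r$ and $k\equiv a_kqr+b_krp+c_kpq \pmod{pqr}$, and define $F_k=\frac{a_k}{p}+\frac{b_k}{q}+\frac{c_k}{r}-\frac{k}{pqr}$. *)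

theory Defs
  imports Complex_Main "HOL-Computational_Algebra.Polynomial" "HOL-Number_Theory.Cong"
begin

definition cyclo :: "nat \<Rightarrow> complex poly" where
  "cyclo m = (\<Prod>k\<in>{k. 0 < k \<and> k < m \<and> coprime k m}. [:- ((cis (2 * pi / real m)) ^ k), 1:])"

definition abc :: "nat \<Rightarrow> nat \<Rightarrow> nat \<Rightarrow> int \<Rightarrow> int \<times> int \<times> int" where
  "abc p q r k = (THE (a, b, c). 0 \<le> a \<and> a < int p \<and> 0 \<le> b \<and> b < int q \<and> 0 \<le> c \<and> c < int r \<and>
      [k = a * int q * int r + b * int r * int p + c * int p * int q] (mod int (p * q * r)))"

definition Ffun :: "nat \<Rightarrow> nat \<Rightarrow> nat \<Rightarrow> int \<Rightarrow> real" where
  "Ffun p q r k = (case abc p q r k of (a, b, c) \<Rightarrow>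
      real_of_int a / real p + real_of_int b / real q + real_of_int c / real r
      - real_of_int k / real (p * q * r))"

definition Ncount :: "nat \<Rightarrow> real list \<Rightarrow> nat" where
  "Ncount d ts = length (filter (\<lambda>t. t = real d) ts)"

end

theory Submission
  imports Defs "HOL-Computational_Algebra.Fundamental_Theorem_Algebra" "HOL-Computational_Algebra.Polynomial_FPS"
begin

lemma dvd_small_int: fixes d a :: int assumes "a dvd d" "\<bar>d\<bar> < a" shows "d = 0"
proof -
  obtain k where k: "d = a * k" using assms(1) by blast
  have "a > 0" using assms(2) by linarith
  show ?thesis
  proof (rule ccontr)
    assume "d \<noteq> 0"
    hence "\<bar>k\<bar> \<ge> 1" using k by auto
    hence "a * \<bar>k\<bar> \<ge> a" using \<open>a > 0\<close> by (simp add: mult_le_cancel_left1)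
    thus False using assms(2) k \<open>a>0\<close> by (simp add: abs_mult)
  qed
qed

lemma uniq_one:
  fixes a b c :: nat and x x' y y' z z' :: int
  assumes "prime a" "prime b" "prime c" "a \<noteq> b" "a \<noteq> c"
    and "0 \<le> x" "x < int a" "0 \<le> x'" "x' < int a"
    and "int (a*b*c) dvd (x*b*c + y*c*a + z*a*b) - (x'*b*c + y'*c*a + z'*a*b)"
  shows "x = x'"
proof -
  have "int a dvd int (a*b*c)" by simp
  have eq: "(x*b*c + y*c*a + z*a*b) - (x'*b*c + y'*c*a + z'*a*b) = (x - x') * (int b * int c) + ((y-y')*int c + (z - z')*int b) * int a"
    by (simp add: algebra_simps)
  have h: "int a dvd (x - x') * (int b * int c) + ((y-y')*int c + (z - z')*int b) * int a"
    using dvd_trans[OF \<open>int a dvd int (a*b*c)\<close> assms(10)] eq by simp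
  hence "int a dvd (x - x') * (int b * int c)"
    by (simp add: dvd_add_left_iff)
  moreover have pa: "prime (int a)" using assms by simp
  moreover have "\<not> int a dvd int b" using assms
    by (metis prime_nat_iff_prime of_nat_dvd_iff primes_dvd_imp_eq)
  moreover have "\<not> int a dvd int c" using assms
    by (metis prime_nat_iff_prime of_nat_dvd_iff primes_dvd_imp_eq)
  ultimately have "int a dvd x - x'" by (simp add: prime_dvd_mult_iff)
  moreover have "\<bar>x - x'\<bar> < int a" using assms by linarith
  ultimately show ?thesis using dvd_small_int by fastforce
qed


definition Pd :: "nat \<Rightarrow> complex poly" where "Pd d = monom 1 d - 1"

lemma poly_Pd: "poly (Pd d) z = z^d - 1" by (simp add: Pd_def poly_monom)

lemma Pd_degree: "d > 0 \<Longrightarrow> degree (Pd d) = d"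
  unfolding Pd_def by (subst diff_conv_add_uminus, subst degree_add_eq_left) (auto simp: degree_monom_eq)

lemma Pd_lead: "d > 0 \<Longrightarrow> lead_coeff (Pd d) = 1"
proof -
  assume "d > 0"
  hence "degree (Pd d) = d" by (rule Pd_degree)
  thus ?thesis using \<open>d>0\<close> by (simp add: Pd_def)
qed

lemma Pd_nz: "d > 0 \<Longrightarrow> Pd d \<noteq> 0"
proof
  assume "d > 0" "Pd d = 0"
  thus False using Pd_lead[of d] by simp
qed

lemma roots_prod:
  assumes "d > 0"
  shows "(\<Prod>j<d. [:- cis (2 * pi * real j / real d), 1:]) = Pd d"
proof -
  have sq: "rsquarefree (Pd d)"
    unfolding rsquarefree_roots
  proof (intro allI notI)
    fix a assume h: "poly (Pd d) a = 0 \<and> poly (pderiv (Pd d)) a = 0"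
    hence "a^d = 1" by (simp add: poly_Pd)
    hence "a \<noteq> 0" using assms by (auto simp: power_0_left)
    have "poly (pderiv (Pd d)) a = of_nat d * a^(d-1)"
      by (simp add: Pd_def pderiv_diff pderiv_monom poly_monom)
    thus False using h \<open>a \<noteq> 0\<close> assms by simp
  qed
  have "Pd d = smult (lead_coeff (Pd d)) (\<Prod>z|poly (Pd d) z = 0. [:-z, 1:])"
    using complex_poly_decompose_rsquarefree[OF sq] by simp
  also have "\<dots> = (\<Prod>z\<in>{z. z^d = 1}. [:-z, 1:])"
    using assms by (simp add: Pd_lead poly_Pd)
  also have "\<dots> = (\<Prod>j<d. [:- cis (2 * pi * real j / real d), 1:])"
    by (rule prod.reindex_bij_betw[symmetric, OF bij_betw_roots_unity[OF assms]])
  finally show ?thesis by simp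
qed


lemma div_prod:
  assumes "m > 0" "e > 0" "e dvd m"
  shows "(\<Prod>k\<in>{k. k<m \<and> e dvd k}. [:- ((cis (2*pi/real m))^k), 1:]) = Pd (m div e)"
proof -
  define d where "d = m div e"
  have m: "m = e * d" using assms by (simp add: d_def)
  have dpos: "d > 0" using assms m by simp
  have set: "{k. k<m \<and> e dvd k} = (\<lambda>j. e*j) ` {..<d}"
  proof (intro set_eqI iffI)
    fix k assume "k \<in> {k. k<m \<and> e dvd k}"
    then obtain j where "k = e*j" "e*j < e*d" using m by auto
    thus "k \<in> (\<lambda>j. e*j) ` {..<d}" by auto
  next
    fix k assume "k \<in> (\<lambda>j. e*j) ` {..<d}"
    thus "k \<in> {k. k<m \<and> e dvd k}" using m assms by auto
  qed
  have inj: "inj_on (\<lambda>j. e*j) {..<d}" using assms by (auto simp: inj_on_def)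
  have "(\<Prod>k\<in>{k. k<m \<and> e dvd k}. [:- ((cis (2*pi/real m))^k), 1:])
     = (\<Prod>j<d. [:- ((cis (2*pi/real m))^(e*j)), 1:])"
    unfolding set by (subst prod.reindex[OF inj]) simp
  also have "\<dots> = (\<Prod>j<d. [:- cis (2 * pi * real j / real d), 1:])"
  proof (rule prod.cong[OF refl])
    fix j
    have "(cis (2*pi/real m))^(e*j) = cis (real (e*j) * (2*pi/real m))" by (rule DeMoivre)
    also have "real (e*j) * (2*pi/real m) = 2 * pi * real j / real d"
      using assms dpos by (simp add: m field_simps)
    finally show "[:- ((cis (2*pi/real m))^(e*j)), 1:] = [:- cis (2 * pi * real j / real d), 1:]" by simp
  qed
  also have "\<dots> = Pd d" by (rule roots_prod[OF dpos])
  finally show ?thesis by (simp add: d_def)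
qed

lemma prod_filter_pow:
  fixes f :: "nat \<Rightarrow> 'a::comm_monoid_mult"
  shows "(\<Prod>k\<in>{k. k<m \<and> P k}. f k) = (\<Prod>k<m. f k ^ (if P k then 1 else 0))"
proof -
  have "{k. k<m \<and> P k} = {k\<in>{..<m}. P k}" by auto
  hence "(\<Prod>k\<in>{k. k<m \<and> P k}. f k) = (\<Prod>k<m. if P k then f k else 1)"
    by (metis (no_types) finite_lessThan prod.inter_filter)
  also have "\<dots> = (\<Prod>k<m. f k ^ (if P k then 1 else 0))" by (intro prod.cong) auto
  finally show ?thesis .
qed

lemma coprime_prime_iff: "prime (p::nat) \<Longrightarrow> coprime k p \<longleftrightarrow> \<not> p dvd k"
  by (meson coprime_commute not_coprimeI dvd_refl prime_imp_coprime not_prime_unit)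


definition G :: "nat \<Rightarrow> complex fps" where "G a = Abs_fps (\<lambda>n. if a dvd n then 1 else 0)"

lemma G_inv: assumes "a > 0" shows "(1 - fps_X^a) * G a = 1"
proof (rule fps_ext)
  fix n
  have "fps_nth ((1 - fps_X^a) * G a) n = fps_nth (G a) n - fps_nth (fps_X^a * G a) n" by (simp add: algebra_simps)
  also have "\<dots> = fps_nth (1 :: complex fps) n"
  proof (cases "n < a")
    case True thus ?thesis using assms by (auto simp: G_def fps_X_power_mult_nth dest: dvd_imp_le)
  next
    case False
    hence "a dvd n \<longleftrightarrow> a dvd (n - a)" by (simp add: dvd_minus_self)
    thus ?thesis using False assms by (auto simp: G_def fps_X_power_mult_nth)
  qed
  finally show "fps_nth ((1 - fps_X^a) * G a) n = fps_nth (1 :: complex fps) n" .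
qed

lemma triple_nth: "fps_nth (G a * G b * G c) n = (\<Sum>s\<in>{0..n}. \<Sum>i\<in>{0..s}. if a dvd i \<and> b dvd (s-i) \<and> c dvd (n-s) then 1 else 0)"
  by (auto simp: fps_mult_nth G_def sum_distrib_right intro!: sum.cong)

definition ext :: "complex fps \<Rightarrow> int \<Rightarrow> complex" where
  "ext f k = (if k < 0 then 0 else fps_nth f (nat k))"

lemma ext_sub: "ext ((1 - fps_X^a) * f) n = ext f n - ext f (n - int a)"
proof (cases "n < 0")
  case True thus ?thesis by (simp add: ext_def)
next
  case False
  have "fps_nth ((1 - fps_X^a) * f) (nat n) = fps_nth f (nat n) - fps_nth (fps_X^a * f) (nat n)" by (simp add: algebra_simps)
  thus ?thesis using False by (auto simp: ext_def fps_X_power_mult_nth nat_diff_distrib)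
qed

lemma ext_Gp: "ext ((\<Sum>i<p. fps_X^i) * f) n = (\<Sum>i<p. ext f (n - int i))"
proof (cases "n < 0")
  case True thus ?thesis by (simp add: ext_def)
next
  case False
  have "fps_nth ((\<Sum>i<p. fps_X^i) * f) (nat n) = (\<Sum>i<p. fps_nth (fps_X^i * f) (nat n))"
    by (simp add: sum_distrib_right fps_sum_nth)
  thus ?thesis using False by (auto simp: ext_def fps_X_power_mult_nth nat_diff_distrib intro!: sum.cong)
qed

lemma sum_window: "(\<Sum>k\<in>{n - int p + 1..n}. f k) = (\<Sum>i<p. f (n - int i))"
proof -
  have "{n - int p + 1..n} = (\<lambda>i. n - int i) ` {..<p}"
  proof (intro set_eqI iffI)
    fix k assume "k \<in> {n - int p + 1..n}"
    hence "k = n - int (nat (n - k))" "nat (n - k) < p" by auto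
    thus "k \<in> (\<lambda>i. n - int i) ` {..<p}" by blast
  qed auto
  moreover have "inj_on (\<lambda>i. n - int i) {..<p}" by (auto simp: inj_on_def)
  ultimately show ?thesis by (simp add: sum.reindex)
qed


lemma neg3a: fixes f A B C :: "'a::comm_ring_1"
  shows "f * ((1 - A) * (1 - B) * (1 - C)) = - (f * (A - 1) * (B - 1) * (C - 1))"
  by (simp add: algebra_simps)

lemma neg3b: fixes M Gp Q R :: "'a::comm_ring_1"
  shows "(1 - M) * (Gp * ((1 - Q) * (1 - R))) = - ((M - 1) * Gp * (Q - 1) * (R - 1))"
  by (simp add: algebra_simps)

locale trip = fixes p q r :: nat
  assumes pr: "prime p" "prime q" "prime r" and ne: "p \<noteq> q" "q \<noteq> r" "p \<noteq> r"
begin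

definition Aof :: "int \<times> int \<times> int \<Rightarrow> int" where
  "Aof t = (case t of (a,b,c) \<Rightarrow> a*int q*int r + b*int r*int p + c*int p*int q)"

definition Tset :: "(int \<times> int \<times> int) set" where
  "Tset = {0..<int p} \<times> {0..<int q} \<times> {0..<int r}"

lemma uniq:
  assumes "t \<in> Tset" "t' \<in> Tset" "int (p*q*r) dvd Aof t - Aof t'"
  shows "t = t'"
proof -
  obtain x y z where t: "t = (x,y,z)" by (cases t) auto
  obtain x' y' z' where t': "t' = (x',y',z')" by (cases t') auto
  have d: "int (p*q*r) dvd (x*q*r + y*r*p + z*p*q) - (x'*q*r + y'*r*p + z'*p*q)"
    using assms(3) by (simp add: t t' Aof_def)
  have r: "0 \<le> x" "x < int p" "0 \<le> x'" "x' < int p" "0 \<le> y" "y < int q" "0 \<le> y'" "y' < int q"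
     "0 \<le> z" "z < int r" "0 \<le> z'" "z' < int r"
    using assms(1,2) by (auto simp: t t' Tset_def)
  have "x = x'" by (rule uniq_one[OF pr(1) pr(2) pr(3) ne(1) ne(3) r(1-4) d])
  moreover have "y = y'"
  proof (rule uniq_one[OF pr(2) pr(3) pr(1) ne(2) ne(1)[symmetric] r(5-8)])
    show "int (q * r * p) dvd y * int r * int p + z * int p * int q + x * int q * int r -
      (y' * int r * int p + z' * int p * int q + x' * int q * int r)"
      using d by (simp add: ac_simps)
  qed
  moreover have "z = z'"
  proof (rule uniq_one[OF pr(3) pr(1) pr(2) ne(3)[symmetric] ne(2)[symmetric] r(9-12)])
    show "int (r * p * q) dvd z * int p * int q + x * int q * int r + y * int r * int p -
      (z' * int p * int q + x' * int q * int r + y' * int r * int p)"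
      using d by (simp add: ac_simps)
  qed
  ultimately show ?thesis by (simp add: t t')
qed

lemma exist: "\<exists>t\<in>Tset. [k = Aof t] (mod int (p*q*r))"
proof -
  define M where "M = int (p*q*r)"
  have Mpos: "M > 0" using pr by (simp add: M_def prime_gt_0_nat)
  define f where "f t = Aof t mod M" for t
  have inj: "inj_on f Tset"
  proof (rule inj_onI)
    fix t t' assume "t \<in> Tset" "t' \<in> Tset" "f t = f t'"
    hence "[Aof t = Aof t'] (mod M)" by (simp add: f_def cong_def)
    hence "M dvd Aof t - Aof t'" by (simp add: cong_iff_dvd_diff)
    thus "t = t'" using uniq \<open>t \<in> Tset\<close> \<open>t' \<in> Tset\<close> M_def by blast
  qed
  have sub: "f ` Tset \<subseteq> {0..<M}" using Mpos by (auto simp: f_def)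
  have "card (f ` Tset) = card Tset" using inj by (simp add: card_image)
  also have "\<dots> = p*q*r" by (simp add: Tset_def card_cartesian_product)
  also have "\<dots> = card {0..<M}" by (simp add: M_def nat_mult_distrib)
  finally have "f ` Tset = {0..<M}"
    using sub by (intro card_subset_eq) auto
  moreover have "k mod M \<in> {0..<M}" using Mpos by simp
  ultimately obtain t where "t \<in> Tset" "f t = k mod M" by (metis imageE)
  thus ?thesis by (metis f_def cong_def M_def)
qed

lemma abc_eq:
  assumes "t \<in> Tset" "[k = Aof t] (mod int (p*q*r))"
  shows "abc p q r k = t"
  unfolding abc_def
proof (rule the_equality)
  obtain x y z where t: "t = (x,y,z)" by (cases t) auto
  show "case t of (a, b, c) \<Rightarrow> 0 \<le> a \<and> a < int p \<and> 0 \<le> b \<and> b < int q \<and> 0 \<le> c \<and> c < int r \<and>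
      [k = a * int q * int r + b * int r * int p + c * int p * int q] (mod int (p * q * r))"
    using assms by (auto simp: t Tset_def Aof_def)
  fix t' assume h: "case t' of (a, b, c) \<Rightarrow> 0 \<le> a \<and> a < int p \<and> 0 \<le> b \<and> b < int q \<and> 0 \<le> c \<and> c < int r \<and>
      [k = a * int q * int r + b * int r * int p + c * int p * int q] (mod int (p * q * r))"
  obtain x' y' z' where t': "t' = (x',y',z')" by (cases t') auto
  have "t' \<in> Tset" "[k = Aof t'] (mod int (p*q*r))" using h by (auto simp: t' Tset_def Aof_def)
  hence "[Aof t' = Aof t] (mod int (p*q*r))" using assms(2) by (metis cong_sym cong_trans)
  hence "int (p*q*r) dvd Aof t' - Aof t" by (simp add: cong_iff_dvd_diff)
  thus "t' = t" using uniq \<open>t' \<in> Tset\<close> assms(1) by blast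
qed

lemma abc_in: "abc p q r k \<in> Tset" and abc_cong: "[k = Aof (abc p q r k)] (mod int (p*q*r))"
proof -
  obtain t where "t \<in> Tset" "[k = Aof t] (mod int (p*q*r))" using exist by blast
  with abc_eq show "abc p q r k \<in> Tset" "[k = Aof (abc p q r k)] (mod int (p*q*r))" by auto
qed


definition Aab :: "int \<Rightarrow> int" where "Aab k = Aof (abc p q r k)"
definition Fi :: "int \<Rightarrow> int" where "Fi k = (Aab k - k) div int (p*q*r)"

lemma pos: "p > 0" "q > 0" "r > 0" "p \<ge> 2" "q \<ge> 2" "r \<ge> 2"
  using pr by (auto simp: prime_gt_0_nat prime_ge_2_nat)

lemma Mpos: "int (p*q*r) > 0" using pos by simp

lemma Fi_eq: "Aab k - k = int (p*q*r) * Fi k"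
proof -
  have "int (p*q*r) dvd Aab k - k" using abc_cong[of k]
    by (metis Aab_def cong_iff_dvd_diff cong_sym)
  thus ?thesis by (simp add: Fi_def)
qed

lemma Ffun_eq: "Ffun p q r k = real_of_int (Fi k)"
proof -
  obtain a b c where t: "abc p q r k = (a,b,c)" by (cases "abc p q r k") auto
  have "real_of_int (Aab k - k) = real_of_int (int (p*q*r) * Fi k)" by (simp add: Fi_eq)
  hence e: "real_of_int a * q * r + real_of_int b * r * p + real_of_int c * p * q - real_of_int k
      = real p * real q * real r * real_of_int (Fi k)"
    by (simp add: Aab_def Aof_def t)
  have "Ffun p q r k = real_of_int a / real p + real_of_int b / real q + real_of_int c / real r
      - real_of_int k / real (p * q * r)" by (simp add: Ffun_def t)
  also have "\<dots> = (real_of_int a * q * r + real_of_int b * r * p + real_of_int c * p * q - real_of_int k)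
      / (real p * real q * real r)" using pos by (simp add: field_simps)
  also have "\<dots> = real_of_int (Fi k)" using pos by (simp add: e)
  finally show ?thesis .
qed

lemma Aab_bounds: "0 \<le> Aab k" "Aab k \<le> (int p - 1)*int q*int r + (int q - 1)*int r*int p + (int r - 1)*int p*int q"
proof -
  obtain a b c where t: "abc p q r k = (a,b,c)" by (cases "abc p q r k") auto
  have r: "0 \<le> a" "a \<le> int p - 1" "0 \<le> b" "b \<le> int q - 1" "0 \<le> c" "c \<le> int r - 1"
    using abc_in[of k] by (auto simp: t Tset_def)
  show "0 \<le> Aab k" using r by (simp add: Aab_def Aof_def t)
  have "a * int q * int r \<le> (int p - 1) * int q * int r" using r by (simp add: mult_right_mono)
  moreover have "b * int r * int p \<le> (int q - 1) * int r * int p" using r by (simp add: mult_right_mono)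
  moreover have "c * int p * int q \<le> (int r - 1) * int p * int q" using r by (simp add: mult_right_mono)
  ultimately show "Aab k \<le> (int p - 1)*int q*int r + (int q - 1)*int r*int p + (int r - 1)*int p*int q"
    by (simp add: Aab_def Aof_def t)
qed

lemma Fi_zero_iff: "Fi k = 0 \<longleftrightarrow> Aab k = k"
  using Fi_eq[of k] Mpos by auto

lemma Fi_neg: "k < 0 \<Longrightarrow> Fi k \<noteq> 0"
  using Fi_zero_iff Aab_bounds(1)[of k] by auto

lemma rep:
  fixes x y z :: nat
  assumes "int (x*q*r + y*r*p + z*p*q) = n" "n < int (p*q*r)"
  shows "Aab n = n" and "abc p q r n = (int x, int y, int z)"
proof -
  have s: "x*q*r + y*r*p + z*p*q < p*q*r"
    using assms(2) unfolding assms(1)[symmetric] of_nat_less_iff .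
  have "x*q*r < p*q*r" using s by linarith
  hence "x < p" using pos by simp
  have "y*r*p < p*q*r" using s by linarith
  hence "y*(r*p) < q*(r*p)" by (simp add: mult_ac)
  hence "y < q" using pos by simp
  have "z*p*q < p*q*r" using s by linarith
  hence "z*(p*q) < r*(p*q)" by (simp add: mult_ac)
  hence "z < r" using pos by simp
  show *: "abc p q r n = (int x, int y, int z)"
    by (rule abc_eq) (use \<open>x<p\<close> \<open>y<q\<close> \<open>z<r\<close> assms in \<open>auto simp: Tset_def Aof_def\<close>)
  thus "Aab n = n" using assms by (simp add: Aab_def Aof_def)
qed

definition Tsum :: int where "Tsum = int q*int r + int r*int p + int p*int q"

lemma Fi_sym: "Fi (int (p*q*r) - Tsum - k) = 2 - Fi k"
proof -
  define M where "M = int (p*q*r)"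
  obtain a b c where t: "abc p q r k = (a,b,c)" by (cases "abc p q r k") auto
  define t' where "t' = (int p - 1 - a, int q - 1 - b, int r - 1 - c)"
  have "t' \<in> Tset" using abc_in[of k] by (auto simp: t Tset_def t'_def)
  have A: "Aab k = a*int q*int r + b*int r*int p + c*int p*int q" by (simp add: Aab_def Aof_def t)
  have At': "Aof t' = 3*M - Tsum - Aab k"
    by (simp add: Aof_def t'_def A M_def Tsum_def algebra_simps)
  have "Aof t' - (M - Tsum - k) = M * (2 - Fi k)"
    using Fi_eq[of k] by (simp add: At' M_def algebra_simps)
  hence "[M - Tsum - k = Aof t'] (mod M)"
    by (metis cong_iff_dvd_diff cong_sym dvd_triv_left)
  hence "abc p q r (M - Tsum - k) = t'" using abc_eq \<open>t' \<in> Tset\<close> M_def by blast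
  hence "Aab (M - Tsum - k) - (M - Tsum - k) = M * (2 - Fi k)"
    using \<open>Aof t' - (M - Tsum - k) = M * (2 - Fi k)\<close> by (simp add: Aab_def)
  hence "M * Fi (M - Tsum - k) = M * (2 - Fi k)" using Fi_eq M_def by metis
  thus ?thesis using pos by (simp add: M_def)
qed

lemma Tsum_big: "Tsum \<ge> int p + int q + int r"
proof -
  have "int q * int r \<ge> int r" using pos by simp
  moreover have "int r * int p \<ge> int p" using pos by simp
  moreover have "int p * int q \<ge> int q" using pos by simp
  ultimately show ?thesis by (simp add: Tsum_def)
qed

lemma Fi_range: assumes "- Tsum < k" "k < int (p*q*r)" shows "Fi k \<in> {0,1,2}"
proof -
  define M where "M = int (p*q*r)"
  have e: "M * Fi k = Aab k - k" using Fi_eq M_def by simp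
  have ub: "Aab k \<le> 3*M - Tsum" using Aab_bounds(2)[of k] by (simp add: M_def Tsum_def algebra_simps)
  have "M * Fi k > M * (-1)" using e Aab_bounds(1)[of k] assms M_def by simp
  hence "Fi k > -1" using Mpos M_def mult_less_cancel_left_pos by blast
  moreover have "M * Fi k < M * 3" using e ub assms by simp
  hence "Fi k < 3" using Mpos M_def mult_less_cancel_left_pos by blast
  ultimately show ?thesis by auto
qed


lemma dvd2: "prime a \<Longrightarrow> prime b \<Longrightarrow> a \<noteq> b \<Longrightarrow> (a*b dvd (k::nat)) \<longleftrightarrow> a dvd k \<and> b dvd k"
  by (meson divides_mult dvd_mult_left dvd_mult_right primes_coprime)

lemma expo:
  assumes "k < p*q*r"
  shows "(if 0<k \<and> coprime k (p*q*r) then 1 else 0) + (if (p*q*r) dvd k then 1 else 0) + (if r dvd k then 1 else 0)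
     + (if p dvd k then 1 else 0) + (if q dvd k then 1 else 0)
   = (if 1 dvd k then 1 else 0) + (if q*r dvd k then 1 else 0) + (if r*p dvd k then 1 else 0)
     + (if p*q dvd k then (1::nat) else 0)"
proof (cases "k = 0")
  case True
  have "\<not> coprime 0 (p*q*r)" using pos by simp
  thus ?thesis using True by simp
next
  case False
  have "\<not> (p*q*r) dvd k" using False assms by (auto dest: dvd_imp_le)
  moreover have "p dvd k \<Longrightarrow> q dvd k \<Longrightarrow> r dvd k \<Longrightarrow> p*q*r dvd k"
  proof -
    assume a: "p dvd k" "q dvd k" "r dvd k"
    have "p*q dvd k" using a pr ne dvd2 by blast
    moreover have "coprime (p*q) r" using pr ne by (simp add: primes_coprime)
    ultimately show ?thesis using a divides_mult by blast
  qed
  moreover have "coprime k p \<longleftrightarrow> \<not> p dvd k" using pr by (simp add: coprime_prime_iff)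
  moreover have "coprime k q \<longleftrightarrow> \<not> q dvd k" using pr by (simp add: coprime_prime_iff)
  moreover have "coprime k r \<longleftrightarrow> \<not> r dvd k" using pr by (simp add: coprime_prime_iff)
  moreover have "q*r dvd k \<longleftrightarrow> q dvd k \<and> r dvd k" using pr ne by (simp add: dvd2)
  moreover have "r*p dvd k \<longleftrightarrow> r dvd k \<and> p dvd k" using pr ne by (simp add: dvd2)
  moreover have "p*q dvd k \<longleftrightarrow> p dvd k \<and> q dvd k" using pr ne by (simp add: dvd2)
  ultimately show ?thesis using False by auto
qed

lemma Pd_as_prod:
  assumes "e > 0" "e dvd p*q*r"
  shows "Pd (p*q*r div e) = (\<Prod>k<p*q*r. [:- ((cis (2*pi/real (p*q*r)))^k), 1:] ^ (if e dvd k then 1 else 0))"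
proof -
  have "Pd (p*q*r div e) = (\<Prod>k\<in>{k. k<p*q*r \<and> e dvd k}. [:- ((cis (2*pi/real (p*q*r)))^k), 1:])"
    using div_prod[of "p*q*r" e] assms pos by simp
  also have "\<dots> = (\<Prod>k<p*q*r. [:- ((cis (2*pi/real (p*q*r)))^k), 1:] ^ (if e dvd k then 1 else 0))"
    by (rule prod_filter_pow)
  finally show ?thesis .
qed

lemma cyclo_as_prod:
  "cyclo (p*q*r) = (\<Prod>k<p*q*r. [:- ((cis (2*pi/real (p*q*r)))^k), 1:] ^ (if 0<k \<and> coprime k (p*q*r) then 1 else 0))"
proof -
  have "{k. 0 < k \<and> k < p*q*r \<and> coprime k (p*q*r)} = {k. k < p*q*r \<and> (0 < k \<and> coprime k (p*q*r))}" by auto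
  thus ?thesis unfolding cyclo_def using prod_filter_pow by simp
qed

lemma cyclo_id:
  "cyclo (p*q*r) * Pd 1 * Pd (p*q) * Pd (q*r) * Pd (r*p) = Pd (p*q*r) * Pd p * Pd q * Pd r"
proof -
  define m where "m = p*q*r"
  define z where "z k = [:- ((cis (2*pi/real m))^k), 1:]" for k
  have mpos: "m > 0" using pos by (simp add: m_def)
  have P1: "Pd 1 = (\<Prod>k<m. z k ^ (if m dvd k then 1 else 0))"
    using Pd_as_prod[of m] mpos by (simp add: m_def z_def)
  have Ppq: "Pd (p*q) = (\<Prod>k<m. z k ^ (if r dvd k then 1 else 0))"
    using Pd_as_prod[of r] pos by (simp add: m_def z_def)
  have Pqr: "Pd (q*r) = (\<Prod>k<m. z k ^ (if p dvd k then 1 else 0))"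
    using Pd_as_prod[of p] pos by (simp add: m_def z_def mult.assoc)
  have Prp: "Pd (r*p) = (\<Prod>k<m. z k ^ (if q dvd k then 1 else 0))"
  proof -
    have e: "p*q*r div q = r*p" using pos by simp
    have "Pd (p*q*r div q) = (\<Prod>k<m. z k ^ (if q dvd k then 1 else 0))"
      unfolding m_def z_def by (rule Pd_as_prod) (use pos in auto)
    thus ?thesis unfolding e .
  qed
  have Pm: "Pd m = (\<Prod>k<m. z k ^ (if 1 dvd k then 1 else 0))"
    using Pd_as_prod[of 1] by (simp add: m_def z_def)
  have Pp: "Pd p = (\<Prod>k<m. z k ^ (if q*r dvd k then 1 else 0))"
    using Pd_as_prod[of "q*r"] pos by (simp add: m_def z_def mult.assoc)
  have Pq: "Pd q = (\<Prod>k<m. z k ^ (if r*p dvd k then 1 else 0))"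
  proof -
    have e: "p*q*r div (r*p) = q" using pos by simp
    have "Pd (p*q*r div (r*p)) = (\<Prod>k<m. z k ^ (if r*p dvd k then 1 else 0))"
      unfolding m_def z_def by (rule Pd_as_prod) (use pos in auto)
    thus ?thesis unfolding e .
  qed
  have Pr: "Pd r = (\<Prod>k<m. z k ^ (if p*q dvd k then 1 else 0))"
    using Pd_as_prod[of "p*q"] pos by (simp add: m_def z_def)
  have C: "cyclo m = (\<Prod>k<m. z k ^ (if 0<k \<and> coprime k m then 1 else 0))"
    using cyclo_as_prod by (simp add: m_def z_def)
  have "cyclo m * Pd 1 * Pd (p*q) * Pd (q*r) * Pd (r*p) =
     (\<Prod>k<m. z k ^ ((if 0<k \<and> coprime k m then 1 else 0) + (if m dvd k then 1 else 0) + (if r dvd k then 1 else 0)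
     + (if p dvd k then 1 else 0) + (if q dvd k then 1 else 0)))"
    unfolding C P1 Ppq Pqr Prp by (simp add: prod.distrib[symmetric] power_add)
  also have "\<dots> = (\<Prod>k<m. z k ^ ((if 1 dvd k then 1 else 0) + (if q*r dvd k then 1 else 0) + (if r*p dvd k then 1 else 0)
     + (if p*q dvd k then (1::nat) else 0)))"
    by (intro prod.cong refl arg_cong[where f="\<lambda>e. z _ ^ e"]) (use expo in \<open>simp add: m_def\<close>)
  also have "\<dots> = Pd m * Pd p * Pd q * Pd r"
    unfolding Pm Pp Pq Pr by (simp add: prod.distrib[symmetric] power_add mult_ac)
  finally show ?thesis by (simp add: m_def)
qed


lemma S_nth:
  assumes "n < p*q*r"
  shows "fps_nth (G (q*r) * G (r*p) * G (p*q)) n = (if Fi (int n) = 0 then 1 else 0)"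
proof -
  obtain x y z where t: "abc p q r (int n) = (x,y,z)" by (cases "abc p q r (int n)") auto
  have xyz: "0 \<le> x" "0 \<le> y" "0 \<le> z" using abc_in[of "int n"] by (auto simp: t Tset_def)
  define i0 where "i0 = nat x * (q*r)"
  define s0 where "s0 = nat x * (q*r) + nat y * (r*p)"
  have key: "(q*r dvd i \<and> r*p dvd (s-i) \<and> p*q dvd (n-s)) \<longleftrightarrow> (Fi (int n) = 0 \<and> i = i0 \<and> s = s0)"
    if "i \<le> s" "s \<le> n" for i s
  proof
    assume h: "q*r dvd i \<and> r*p dvd (s-i) \<and> p*q dvd (n-s)"
    then obtain x' y' z' where e: "i = x'*(q*r)" "s - i = y'*(r*p)" "n - s = z'*(p*q)"
      by (metis dvd_def mult.commute)
    have n: "n = x'*q*r + y'*r*p + z'*p*q" using e that by (simp add: mult.assoc)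
    have "int (x'*q*r + y'*r*p + z'*p*q) = int n" using n by simp
    moreover have "int n < int (p*q*r)" using assms of_nat_less_iff by blast
    ultimately have A: "Aab (int n) = int n" "abc p q r (int n) = (int x', int y', int z')"
      using rep by blast+
    show "Fi (int n) = 0 \<and> i = i0 \<and> s = s0"
      using A e that t Fi_zero_iff by (auto simp: i0_def s0_def)
  next
    assume h: "Fi (int n) = 0 \<and> i = i0 \<and> s = s0"
    hence "Aab (int n) = int n" using Fi_zero_iff by simp
    hence "int n = x * int q * int r + y * int r * int p + z * int p * int q"
      by (simp add: Aab_def Aof_def t)
    hence "int n = int (nat x * q * r + nat y * r * p + nat z * p * q)" using xyz by simp
    hence n: "n = nat x * q * r + nat y * r * p + nat z * p * q" by linarith
    show "q*r dvd i \<and> r*p dvd (s-i) \<and> p*q dvd (n-s)"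
      using h by (simp add: i0_def s0_def n mult.assoc)
  qed
  have "fps_nth (G (q*r) * G (r*p) * G (p*q)) n =
    (\<Sum>s\<in>{0..n}. \<Sum>i\<in>{0..s}. if Fi (int n) = 0 \<and> i = i0 \<and> s = s0 then 1 else 0)"
    unfolding triple_nth by (intro sum.cong refl) (use key in auto)
  also have "\<dots> = (if Fi (int n) = 0 then 1 else 0)"
  proof (cases "Fi (int n) = 0")
    case True
    hence "Aab (int n) = int n" using Fi_zero_iff by simp
    hence "int n = x * int q * int r + y * int r * int p + z * int p * int q"
      by (simp add: Aab_def Aof_def t)
    hence "int n = int (nat x * q * r + nat y * r * p + nat z * p * q)" using xyz by simp
    hence n: "n = nat x * q * r + nat y * r * p + nat z * p * q" by linarith
    have le: "i0 \<le> s0" "s0 \<le> n" by (auto simp: i0_def s0_def n mult.assoc)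
    have "(\<Sum>i\<in>{0..s}. if Fi (int n) = 0 \<and> i = i0 \<and> s = s0 then 1 else 0) = (if s = s0 then 1 else (0::complex))"
      if "s \<le> n" for s
      using True le by (cases "s = s0") (auto simp: sum.delta)
    hence "(\<Sum>s\<in>{0..n}. \<Sum>i\<in>{0..s}. if Fi (int n) = 0 \<and> i = i0 \<and> s = s0 then 1 else (0::complex))
        = (\<Sum>s\<in>{0..n}. if s = s0 then 1 else 0)" by (intro sum.cong) auto
    also have "\<dots> = 1" using le by (simp add: sum.delta)
    finally show ?thesis using True by simp
  qed simp
  finally show ?thesis .
qed


definition e0 :: "nat \<Rightarrow> int \<Rightarrow> int" where "e0 d k = (if Fi k = int d then 1 else 0)"

definition E :: "int \<Rightarrow> int" where
  "E n = (\<Sum>i<p. e0 0 (n - int i) + e0 0 (n - int i - int q - int r) - e0 0 (n - int i - int q) - e0 0 (n - int i - int r))"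

lemma fps_Pd: "fps_of_poly (Pd d) = fps_X^d - 1"
  by (simp add: Pd_def fps_of_poly_diff fps_of_poly_monom')

lemma fps_cyclo:
  "fps_of_poly (cyclo (p*q*r)) = (1 - fps_X^(p*q*r)) * ((\<Sum>i<p. fps_X^i) * ((1 - fps_X^q) * ((1 - fps_X^r) *
      (G (q*r) * G (r*p) * G (p*q)))))"
proof -
  define f where "f = fps_of_poly (cyclo (p*q*r))"
  define X :: "complex fps" where "X = fps_X"
  define Gp where "Gp = (\<Sum>i<p. X^i)"
  define U where "U = (1 - X^(p*q)) * (1 - X^(q*r)) * (1 - X^(r*p))"
  define V where "V = (1 - X^(p*q*r)) * (Gp * ((1 - X^q) * (1 - X^r)))"
  define S where "S = G (q*r) * G (r*p) * G (p*q)"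
  have h0: "f * (X^1 - 1) * (X^(p*q) - 1) * (X^(q*r) - 1) * (X^(r*p) - 1) =
     (X^(p*q*r) - 1) * (X^p - 1) * (X^q - 1) * (X^r - 1)"
  proof -
    have "fps_of_poly (cyclo (p*q*r) * Pd 1 * Pd (p*q) * Pd (q*r) * Pd (r*p)) =
      fps_of_poly (Pd (p*q*r) * Pd p * Pd q * Pd r)" by (simp only: cyclo_id)
    thus ?thesis by (simp only: fps_of_poly_mult fps_Pd f_def X_def)
  qed
  have gp: "X^p - 1 = (X - 1) * Gp" unfolding Gp_def by (rule power_diff_1_eq)
  have "(X - 1) * (f * (X^(p*q) - 1) * (X^(q*r) - 1) * (X^(r*p) - 1)) =
     (X - 1) * ((X^(p*q*r) - 1) * Gp * (X^q - 1) * (X^r - 1))"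
  proof -
    have "(X - 1) * (f * (X^(p*q) - 1) * (X^(q*r) - 1) * (X^(r*p) - 1)) =
      f * (X^1 - 1) * (X^(p*q) - 1) * (X^(q*r) - 1) * (X^(r*p) - 1)" by (simp only: power_one_right mult_ac)
    also have "\<dots> = (X^(p*q*r) - 1) * (X^p - 1) * (X^q - 1) * (X^r - 1)" by (rule h0)
    also have "\<dots> = (X - 1) * ((X^(p*q*r) - 1) * Gp * (X^q - 1) * (X^r - 1))" by (simp only: gp mult_ac)
    finally show ?thesis .
  qed
  moreover have "X - 1 \<noteq> 0"
  proof
    assume "X - 1 = 0"
    hence "fps_nth (X - 1) 0 = 0" by simp
    thus False by (simp add: X_def)
  qed
  ultimately have h1: "f * (X^(p*q) - 1) * (X^(q*r) - 1) * (X^(r*p) - 1) =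
     (X^(p*q*r) - 1) * Gp * (X^q - 1) * (X^r - 1)" using mult_left_cancel by blast
  have h2: "f * U = V"
    unfolding U_def V_def neg3a neg3b h1 ..
  have US: "U * S = 1"
  proof -
    have "U * S = ((1 - X^(q*r)) * G (q*r)) * ((1 - X^(r*p)) * G (r*p)) * ((1 - X^(p*q)) * G (p*q))"
      unfolding U_def S_def by (simp only: mult_ac)
    also have "\<dots> = 1" using pos by (simp add: G_inv X_def)
    finally show ?thesis .
  qed
  have "f = f * (U * S)" by (simp only: US mult_1_right)
  also have "\<dots> = (f * U) * S" by (rule mult.assoc[symmetric])
  also have "\<dots> = V * S" by (simp only: h2)
  finally show ?thesis unfolding f_def V_def S_def X_def Gp_def by (simp only: mult.assoc)
qed

lemma ext_S: "k < int (p*q*r) \<Longrightarrow> ext (G (q*r) * G (r*p) * G (p*q)) k = of_int (e0 0 k)"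
proof (cases "k < 0")
  case True thus ?thesis using Fi_neg by (simp add: ext_def e0_def)
next
  case False
  assume "k < int (p*q*r)"
  hence "nat k < p*q*r" using False by linarith
  thus ?thesis using False S_nth[of "nat k"] by (simp add: ext_def e0_def)
qed

lemma first:
  assumes "n < int (p*q*r)"
  shows "(if n < 0 then 0 else coeff (cyclo (p*q*r)) (nat n)) = of_int (E n)"
proof -
  define S where "S = G (q*r) * G (r*p) * G (p*q)"
  have "(if n < 0 then 0 else coeff (cyclo (p*q*r)) (nat n)) = ext (fps_of_poly (cyclo (p*q*r))) n"
    by (simp add: ext_def)
  also have "\<dots> = ext ((\<Sum>i<p. fps_X^i) * ((1 - fps_X^q) * ((1 - fps_X^r) * S))) n"
    unfolding fps_cyclo S_def ext_sub using assms by (simp add: ext_def)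
  also have "\<dots> = (\<Sum>i<p. ext ((1 - fps_X^q) * ((1 - fps_X^r) * S)) (n - int i))"
    by (rule ext_Gp)
  also have "\<dots> = (\<Sum>i<p. ext S (n - int i) - ext S (n - int i - int r) - (ext S (n - int i - int q) - ext S (n - int i - int q - int r)))"
    unfolding ext_sub by (simp add: algebra_simps)
  also have "\<dots> = of_int (E n)"
    unfolding E_def of_int_sum
  proof (intro sum.cong refl)
    have sk: "ext S k = of_int (e0 0 k)" if "k \<le> n" for k
      unfolding S_def by (rule ext_S) (use that assms in linarith)
    fix i assume "i \<in> {..<p}"
    show "ext S (n - int i) - ext S (n - int i - int r) - (ext S (n - int i - int q) - ext S (n - int i - int q - int r)) =
      of_int (e0 0 (n - int i) + e0 0 (n - int i - int q - int r) - e0 0 (n - int i - int q) - e0 0 (n - int i - int r))"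
    proof -
      have a: "ext S (n - int i) = of_int (e0 0 (n - int i))" by (rule sk) simp
      have b: "ext S (n - int i - int r) = of_int (e0 0 (n - int i - int r))" by (rule sk) simp
      have c: "ext S (n - int i - int q) = of_int (e0 0 (n - int i - int q))" by (rule sk) simp
      have d: "ext S (n - int i - int q - int r) = of_int (e0 0 (n - int i - int q - int r))" by (rule sk) simp
      show ?thesis unfolding a b c d by simp
    qed
  qed
  finally show ?thesis .
qed


lemma reflect_Pd: assumes "d > 0" shows "reflect_poly (Pd d) = - Pd d"
proof (rule poly_eqI)
  fix j
  have c: "coeff (Pd d) j = (if j = d then 1 else 0) - (if j = 0 then 1 else 0)" for j
    by (simp add: Pd_def coeff_monom)
  show "coeff (reflect_poly (Pd d)) j = coeff (- Pd d) j"
    using assms by (auto simp: coeff_reflect_poly Pd_degree c)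
qed

definition phi :: nat where "phi = p*q*r + p + q + r - (1 + p*q + q*r + r*p)"

lemma cyclo_reflect: "reflect_poly (cyclo (p*q*r)) = cyclo (p*q*r)" and cyclo_degree: "degree (cyclo (p*q*r)) = phi"
proof -
  define C where "C = cyclo (p*q*r)"
  define L where "L = Pd 1 * Pd (p*q) * Pd (q*r) * Pd (r*p)"
  have id: "C * L = Pd (p*q*r) * Pd p * Pd q * Pd r" using cyclo_id by (simp add: C_def L_def mult.assoc)
  have Lnz: "L \<noteq> 0" using pos by (simp add: L_def Pd_nz)
  have Rnz: "Pd (p*q*r) * Pd p * Pd q * Pd r \<noteq> 0" using pos by (simp add: Pd_nz)
  hence Cnz: "C \<noteq> 0" using id by auto
  have "reflect_poly C * L = reflect_poly (C * L)"
    using pos by (simp add: L_def reflect_poly_mult reflect_Pd)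
  also have "\<dots> = C * L"
    unfolding id using pos by (simp add: reflect_poly_mult reflect_Pd)
  finally have "reflect_poly C * L = C * L" .
  thus "reflect_poly (cyclo (p*q*r)) = cyclo (p*q*r)" using Lnz by (simp add: C_def)
  have "degree (C * L) = degree C + (1 + p*q + q*r + r*p)"
    using Cnz pos by (simp add: L_def degree_mult_eq Pd_nz Pd_degree)
  moreover have "degree (C * L) = p*q*r + p + q + r"
    unfolding id using pos by (simp add: degree_mult_eq Pd_nz Pd_degree)
  ultimately show "degree (cyclo (p*q*r)) = phi" by (simp add: phi_def C_def)
qed

definition cext :: "int \<Rightarrow> complex" where
  "cext n = (if n < 0 then 0 else coeff (cyclo (p*q*r)) (nat n))"

lemma palin: "cext n = cext (int phi - n)"
proof -
  have co: "coeff (cyclo (p*q*r)) j = (if j > phi then 0 else coeff (cyclo (p*q*r)) (phi - j))" for j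
    using coeff_reflect_poly[of "cyclo (p*q*r)" j] by (simp add: cyclo_reflect cyclo_degree)
  show ?thesis
  proof (cases "n < 0")
    case True thus ?thesis using co[of "nat (int phi - n)"] by (simp add: cext_def)
  next
    case False
    show ?thesis
    proof (cases "nat n > phi")
      case True thus ?thesis using co[of "nat n"] False by (simp add: cext_def)
    next
      case False2: False
      have "nat (int phi - n) = phi - nat n" using False False2 by linarith
      thus ?thesis using co[of "nat n"] False False2 by (simp add: cext_def)
    qed
  qed
qed

definition E2 :: "int \<Rightarrow> int" where
  "E2 n = (\<Sum>i<p. e0 2 (n - int i) + e0 2 (n - int i - int q - int r) - e0 2 (n - int i - int q) - e0 2 (n - int i - int r))"

definition E1 :: "int \<Rightarrow> int" where
  "E1 n = (\<Sum>i<p. e0 1 (n - int i - int q) + e0 1 (n - int i - int r) - e0 1 (n - int i) - e0 1 (n - int i - int q - int r))"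

lemma e0_2: "e0 2 k = e0 0 (int (p*q*r) - Tsum - k)"
  using Fi_sym[of k] by (auto simp: e0_def)

lemma phi_int: "int phi = int (p*q*r) - Tsum + int p + int q + int r - 1"
proof -
  have h: "(int p - 1)*(int q - 1)*(int r - 1) \<ge> 0" using pos by simp
  have "(int p - 1)*(int q - 1)*(int r - 1) = int (p*q*r + p + q + r) - int (1 + p*q + q*r + r*p)"
    by (simp add: algebra_simps)
  hence "1 + p*q + q*r + r*p \<le> p*q*r + p + q + r" using h by linarith
  thus ?thesis by (simp add: phi_def Tsum_def of_nat_diff algebra_simps)
qed

lemma phi_lt: "int phi < int (p*q*r)"
  using phi_int Tsum_big by linarith

lemma E2_E: "E2 n = E (int phi - n)"
proof -
  have "E (int phi - n) = (\<Sum>i<p. e0 0 (int phi - n - int (p - Suc i)) + e0 0 (int phi - n - int (p - Suc i) - int q - int r)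
     - e0 0 (int phi - n - int (p - Suc i) - int q) - e0 0 (int phi - n - int (p - Suc i) - int r))"
    unfolding E_def by (rule sum.nat_diff_reindex[symmetric])
  also have "\<dots> = E2 n"
    unfolding E2_def
  proof (intro sum.cong refl)
    fix i assume "i \<in> {..<p}"
    hence ip: "int (p - Suc i) = int p - 1 - int i" by auto
    show "e0 0 (int phi - n - int (p - Suc i)) + e0 0 (int phi - n - int (p - Suc i) - int q - int r)
     - e0 0 (int phi - n - int (p - Suc i) - int q) - e0 0 (int phi - n - int (p - Suc i) - int r) =
     e0 2 (n - int i) + e0 2 (n - int i - int q - int r) - e0 2 (n - int i - int q) - e0 2 (n - int i - int r)"
      unfolding e0_2 ip phi_int by (simp add: algebra_simps)
  qed
  finally show ?thesis ..
qed

lemma second: assumes "0 \<le> n" "n < int (p*q*r)" shows "coeff (cyclo (p*q*r)) (nat n) = of_int (E2 n)"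
proof -
  have "coeff (cyclo (p*q*r)) (nat n) = cext n" using assms by (simp add: cext_def)
  also have "\<dots> = cext (int phi - n)" by (rule palin)
  also have "\<dots> = of_int (E (int phi - n))"
    unfolding cext_def by (rule first) (use phi_lt assms in linarith)
  finally show ?thesis by (simp add: E2_E)
qed

lemma e_sum: assumes "- Tsum < k" "k < int (p*q*r)" shows "e0 0 k + e0 1 k + e0 2 k = 1"
  using Fi_range[OF assms] by (auto simp: e0_def)

lemma E1_E: assumes "0 \<le> n" "n < int (p*q*r)" shows "E1 n = E n + E2 n"
  unfolding E1_def E_def E2_def sum.distrib[symmetric]
proof (intro sum.cong refl)
  fix i assume "i \<in> {..<p}"
  hence i: "int i < int p" by simp
  have T: "int p + int q + int r \<le> Tsum" by (rule Tsum_big)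
  have a: "e0 0 k + e0 1 k + e0 2 k = 1" if "n - int p - int q - int r < k" "k \<le> n" for k
    by (rule e_sum) (use that T assms in linarith)+
  have a1: "e0 1 (n - int i) = 1 - e0 0 (n - int i) - e0 2 (n - int i)" using a[of "n - int i"] i by simp
  have a2: "e0 1 (n - int i - int q) = 1 - e0 0 (n - int i - int q) - e0 2 (n - int i - int q)"
    using a[of "n - int i - int q"] i by simp
  have a3: "e0 1 (n - int i - int r) = 1 - e0 0 (n - int i - int r) - e0 2 (n - int i - int r)"
    using a[of "n - int i - int r"] i by simp
  have a4: "e0 1 (n - int i - int q - int r) = 1 - e0 0 (n - int i - int q - int r) - e0 2 (n - int i - int q - int r)"
    using a[of "n - int i - int q - int r"] i by simp
  show "e0 1 (n - int i - int q) + e0 1 (n - int i - int r) - e0 1 (n - int i) - e0 1 (n - int i - int q - int r) =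
    e0 0 (n - int i) + e0 0 (n - int i - int q - int r) - e0 0 (n - int i - int q) - e0 0 (n - int i - int r) +
    (e0 2 (n - int i) + e0 2 (n - int i - int q - int r) - e0 2 (n - int i - int q) - e0 2 (n - int i - int r))"
    unfolding a1 a2 a3 a4 by simp
qed

lemma Ncount2: "int (Ncount d [Ffun p q r a, Ffun p q r b]) = e0 d a + e0 d b"
  by (simp add: Ncount_def Ffun_eq e0_def)

end


theorem lemma5:
  fixes p q r :: nat and n :: int
  assumes "prime p" "prime q" "prime r" "p \<noteq> q" "q \<noteq> r" "p \<noteq> r"
    and "p < q" "p < r" and "0 \<le> n" "n < int (p * q * r)"
  defines "F \<equiv> Ffun p q r"
  shows "coeff (cyclo (p * q * r)) (nat n) =
           of_int (\<Sum>k\<in>{n - int p + 1..n}.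
             int (Ncount 0 [F k, F (k - int q - int r)]) - int (Ncount 0 [F (k - int q), F (k - int r)]))
       \<and> coeff (cyclo (p * q * r)) (nat n) =
           of_int (\<Sum>k\<in>{n - int p + 1..n}.
             int (Ncount 2 [F k, F (k - int q - int r)]) - int (Ncount 2 [F (k - int q), F (k - int r)]))
       \<and> coeff (cyclo (p * q * r)) (nat n) =
           complex_of_real ((1 / 2) * real_of_int (\<Sum>k\<in>{n - int p + 1..n}.
             int (Ncount 1 [F (k - int q), F (k - int r)]) - int (Ncount 1 [F k, F (k - int q - int r)])))"
proof -
  interpret trip p q r using assms by unfold_locales
  have W0: "(\<Sum>k\<in>{n - int p + 1..n}.
             int (Ncount 0 [F k, F (k - int q - int r)]) - int (Ncount 0 [F (k - int q), F (k - int r)])) = E n"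
    unfolding sum_window E_def F_def Ncount2 by (intro sum.cong refl) (simp add: algebra_simps)
  have W2: "(\<Sum>k\<in>{n - int p + 1..n}.
             int (Ncount 2 [F k, F (k - int q - int r)]) - int (Ncount 2 [F (k - int q), F (k - int r)])) = E2 n"
    unfolding sum_window E2_def F_def Ncount2 by (intro sum.cong refl) (simp add: algebra_simps)
  have W1: "(\<Sum>k\<in>{n - int p + 1..n}.
             int (Ncount 1 [F (k - int q), F (k - int r)]) - int (Ncount 1 [F k, F (k - int q - int r)])) = E1 n"
    unfolding sum_window E1_def F_def Ncount2 by (intro sum.cong refl) (simp add: algebra_simps)
  have c1: "coeff (cyclo (p * q * r)) (nat n) = of_int (E n)"
    using first[of n] assms by simp
  have c2: "coeff (cyclo (p * q * r)) (nat n) = of_int (E2 n)"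
    using second[of n] assms by simp
  have "E2 n = E n" using c1 c2 by simp
  hence "E1 n = 2 * E n" using E1_E[of n] assms by simp
  hence c3: "coeff (cyclo (p * q * r)) (nat n) = complex_of_real ((1 / 2) * real_of_int (E1 n))"
    using c1 by simp
  show ?thesis unfolding W0 W1 W2 using c1 c2 c3 by simp
qed

end
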